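(* Let $\mathbf{C}=\mathbf{C}_1\,\dot\cup\,\mathbf{C}_2$, $\mathbf{B}\in\dot{\mathbb{P}}(\mathbb{L}(\mathbf{C}_1))$ with $|\mathbf{B}|=|\mathbf{C}_1|$, and let $\mathbf{C}'$ be a finite set of binary causes with $\mathbf{C}'\cap\mathbf{C}=\varnothing$ such that potential outcomes $D_{\mathbf{C}=\mathbf{c},\mathbf{C}'=\mathbf{c}'}(\omega)$ are defined. Suppose every $X'\in\mathbf{C}'$ is not causally influenced by $\mathbf{C}$, and the relativized consistency axiom $D_{\mathbf{C}=\mathbf{c},\mathbf{C}'=\mathbf{C}'(\omega)}(\omega)=D_{\mathbf{C}=\mathbf{c}}(\omega)$ holds for all $\omega,\mathbf{c}$. If $\mathbf{B}$ is irreducible for $\mathcal{D}(\mathbf{C},\Omega)$, then $\mathbf{B}$ is irreducible for $\mathcal{D}(\mathbf{C}\cup\mathbf{C}',\Omega)$.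
   Context: An event is a binary random variable on a population $\Omega$; $\overline{X}=1-X$; $\mathbb{L}(\mathbf{C})=\mathbf{C}\cup\{\overline{X}:X\in\mathbf{C}\}$; $\dot{\mathbb{P}}(\mathbb{L}(\mathbf{C}))$ is the set of subsets of $\mathbb{L}(\mathbf{C})$ not containing both $X$ and $\overline{X}$ for any $X$; $(L)_{\mathbf{c}}$ is the value of literal $L$ under assignment $\mathbf{c}$; $\bigwedge(\mathbf{B})=\min_{L\in\mathbf{B}}L$. For a set of causes $\mathbf{C}$, potential outcomes $\mathcal{D}(\mathbf{C},\Omega)$ are values $D_{\mathbf{c}}(\omega)\in\{0,1\}$ for all $\omega\in\Omega$ and assignments $\mathbf{c}$ to $\mathbf{C}$; $\mathbf{C}'(\omega)$ denotes the actual values of $\mathbf{C}'$ for $\omega$. A variable $X'$ is not causally influenced by $\mathbf{C}$ if for every $\omega$ its potential outcomes $X'_{\mathbf{C}=\mathbf{c}}(\omega)$ do not depend on $\mathbf{c}$. A sufficient cause representation $(\mathbf{A},\mathfrak{B})$ for $\mathcal{D}(\mathbf{C},\Omega)$ is a tuple $\mathbf{A}=\langle A_1,\dots,A_p\rangle$ of binary random variables on $\Omega$ unaffected by interventions on $\mathbf{C}$ and a tuple $\mathfrak{B}=\langle\mathbf{B}_1,\dots,\mathbf{B}_p\rangle$, $\mathbf{B}_i\in\dot{\mathbb{P}}(\mathbb{L}(\mathbf{C}))$, with: for all $\omega,\mathbf{c}$, $D_{\mathbf{c}}(\omega)=1$ iff some $j$ has $A_j(\omega)=1$ and $(\bigwedge(\mathbf{B}_j))_{\mathbf{c}}=1$.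 $\mathbf{B}\in\dot{\mathbb{P}}(\mathbb{L}(\mathbf{C}))$ is irreducible for $\mathcal{D}(\mathbf{C},\Omega)$ if in every such representation some $\mathbf{B}_i\in\mathfrak{B}$ satisfies $\mathbf{B}\subseteq\mathbf{B}_i$ (and analogously with $\mathbf{C}\cup\mathbf{C}'$ in place of $\mathbf{C}$). *)

theory Defs
  imports Main
begin

text \<open>Literals over a set of causes: a literal is a pair (X, b); (X, True) stands for X and
  (X, False) for its complement 1 - X.\<close>

definition lits :: "'v set \<Rightarrow> ('v \<times> bool) set" where
  "lits C = C \<times> UNIV"

definition dotP :: "'v set \<Rightarrow> ('v \<times> bool) set set" where
  "dotP C = {B. B \<subseteq> lits C \<and> (\<forall>X. \<not> ((X, True) \<in> B \<and> (X, False) \<in> B))}"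

text \<open>Assignments to the causes in C (values outside C fixed to False, canonical form).\<close>
definition assignments :: "'v set \<Rightarrow> ('v \<Rightarrow> bool) set" where
  "assignments C = {c. \<forall>v. v \<notin> C \<longrightarrow> c v = False}"

definition lit_val :: "('v \<Rightarrow> bool) \<Rightarrow> 'v \<times> bool \<Rightarrow> bool" where
  "lit_val c l = (c (fst l) = snd l)"

definition conj_val :: "('v \<Rightarrow> bool) \<Rightarrow> ('v \<times> bool) set \<Rightarrow> bool" where
  "conj_val c B = (\<forall>l\<in>B. lit_val c l)"

text \<open>A sufficient cause representation: a finite list of pairs (A_j, B_j), with A_j a binary
  random variable on the population (a function of the unit only, hence unaffected by
  interventions on C) and B_j in dotP(L(C)).\<close>
definition is_scr :: "'v set \<Rightarrow> (('v \<Rightarrow> bool) \<Rightarrow> 'w \<Rightarrow> bool) \<Rightarrow> 'w set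
    \<Rightarrow> (('w \<Rightarrow> bool) \<times> ('v \<times> bool) set) list \<Rightarrow> bool" where
  "is_scr C D \<Omega> R \<longleftrightarrow>
     (\<forall>(A, Bj) \<in> set R. Bj \<in> dotP C) \<and>
     (\<forall>\<omega>\<in>\<Omega>. \<forall>c\<in>assignments C.
        D c \<omega> \<longleftrightarrow> (\<exists>(A, Bj) \<in> set R. A \<omega> \<and> conj_val c Bj))"

definition irreducible :: "'v set \<Rightarrow> (('v \<Rightarrow> bool) \<Rightarrow> 'w \<Rightarrow> bool) \<Rightarrow> 'w set
    \<Rightarrow> ('v \<times> bool) set \<Rightarrow> bool" where
  "irreducible C D \<Omega> B \<longleftrightarrow> B \<in> dotP C \<and>
     (\<forall>R. is_scr C D \<Omega> R \<longrightarrow> (\<exists>(A, Bi) \<in> set R. B \<subseteq> Bi))"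

end

theory Submission
  imports Defs
begin

theorem mainTheorem5:
  fixes C1 C2 C' :: "'v set" and \<Omega> :: "'w set" and B :: "('v \<times> bool) set"
    and D :: "('v \<Rightarrow> bool) \<Rightarrow> 'w \<Rightarrow> bool"
    and D' :: "('v \<Rightarrow> bool) \<Rightarrow> 'w \<Rightarrow> bool"
    and Cact :: "'v \<Rightarrow> 'w \<Rightarrow> bool"
    and Xpot :: "'v \<Rightarrow> ('v \<Rightarrow> bool) \<Rightarrow> 'w \<Rightarrow> bool"
  assumes "finite C1" and "finite C2" and "C1 \<inter> C2 = {}"
    and "B \<in> dotP C1" and "card B = card C1"
    and "finite C'" and "C' \<inter> (C1 \<union> C2) = {}"
    and "\<forall>X\<in>C'. \<forall>\<omega>\<in>\<Omega>. \<forall>c\<in>assignments (C1 \<union> C2). \<forall>c2\<in>assignments (C1 \<union> C2).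
           Xpot X c \<omega> = Xpot X c2 \<omega>"
    and "\<forall>\<omega>\<in>\<Omega>. \<forall>c\<in>assignments (C1 \<union> C2).
           D' (\<lambda>v. if v \<in> C1 \<union> C2 then c v else if v \<in> C' then Cact v \<omega> else False) \<omega>
           = D c \<omega>"
    and "irreducible (C1 \<union> C2) D \<Omega> B"
  shows "irreducible (C1 \<union> C2 \<union> C') D' \<Omega> B"
proof -
  let ?C = "C1 \<union> C2"
  have Bd: "B \<in> dotP (?C \<union> C')" using assms(4) unfolding dotP_def lits_def by auto
  have main: "\<exists>(A, Bi) \<in> set R'. B \<subseteq> Bi" if scr: "is_scr (?C \<union> C') D' \<Omega> R'" for R'
  proof -
    define ext where "ext c \<omega> = (\<lambda>v. if v \<in> ?C then c v else if v \<in> C' then Cact v \<omega> else False)" for c \<omega>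
    define R where "R = map (\<lambda>(A, Bj). ((\<lambda>\<omega>. A \<omega> \<and> conj_val (ext (\<lambda>_. False) \<omega>) (Bj \<inter> lits C')), Bj \<inter> lits ?C)) R'"
    have s1: "\<forall>(A, Bj) \<in> set R'. Bj \<in> dotP (?C \<union> C')"
     and s2: "\<forall>\<omega>\<in>\<Omega>. \<forall>c\<in>assignments (?C \<union> C'). D' c \<omega> \<longleftrightarrow> (\<exists>(A, Bj) \<in> set R'. A \<omega> \<and> conj_val c Bj)"
      using scr unfolding is_scr_def by auto
    have "is_scr ?C D \<Omega> R"
      unfolding is_scr_def
    proof (intro conjI ballI)
      fix x assume "x \<in> set R"
      then show "case x of (A, Bj) \<Rightarrow> Bj \<in> dotP ?C"
        using s1 unfolding R_def dotP_def lits_def by auto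
    next
      fix \<omega> c assume w: "\<omega> \<in> \<Omega>" and c: "c \<in> assignments ?C"
      have ea: "ext c \<omega> \<in> assignments (?C \<union> C')" unfolding ext_def assignments_def by auto
      have D'eq: "D' (ext c \<omega>) \<omega> = D c \<omega>" using assms(9) w c unfolding ext_def by auto
      have cv: "conj_val (ext c \<omega>) Bj \<longleftrightarrow> conj_val (ext (\<lambda>_. False) \<omega>) (Bj \<inter> lits C') \<and> conj_val c (Bj \<inter> lits ?C)"
        if "Bj \<in> dotP (?C \<union> C')" for Bj
      proof -
        have sub: "Bj \<subseteq> lits (?C \<union> C')" using that unfolding dotP_def by auto
        have split: "Bj = (Bj \<inter> lits C') \<union> (Bj \<inter> lits ?C)" using sub unfolding lits_def by auto
        have e1: "lit_val (ext c \<omega>) l = lit_val (ext (\<lambda>_. False) \<omega>) l" if "l \<in> lits C'" for l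
          using that assms(7) unfolding lits_def lit_val_def ext_def by auto
        have e2: "lit_val (ext c \<omega>) l = lit_val c l" if "l \<in> lits ?C" for l
          using that unfolding lits_def lit_val_def ext_def by auto
        have "conj_val (ext c \<omega>) Bj \<longleftrightarrow> (\<forall>l\<in>Bj \<inter> lits C'. lit_val (ext c \<omega>) l) \<and> (\<forall>l\<in>Bj \<inter> lits ?C. lit_val (ext c \<omega>) l)"
          unfolding conj_val_def by (subst split) blast
        also have "\<dots> \<longleftrightarrow> conj_val (ext (\<lambda>_. False) \<omega>) (Bj \<inter> lits C') \<and> conj_val c (Bj \<inter> lits ?C)"
          unfolding conj_val_def using e1 e2 by auto
        finally show ?thesis .
      qed
      show "D c \<omega> \<longleftrightarrow> (\<exists>(A, Bj) \<in> set R. A \<omega> \<and> conj_val c Bj)"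
      proof -
        have "D c \<omega> \<longleftrightarrow> (\<exists>(A, Bj) \<in> set R'. A \<omega> \<and> conj_val (ext c \<omega>) Bj)"
          using D'eq s2 w ea by auto
        also have "\<dots> \<longleftrightarrow> (\<exists>(A, Bj) \<in> set R'. A \<omega> \<and> conj_val (ext (\<lambda>_. False) \<omega>) (Bj \<inter> lits C') \<and> conj_val c (Bj \<inter> lits ?C))"
        proof
          assume "\<exists>(A, Bj) \<in> set R'. A \<omega> \<and> conj_val (ext c \<omega>) Bj"
          then obtain A Bj where "(A, Bj) \<in> set R'" "A \<omega>" "conj_val (ext c \<omega>) Bj" by blast
          then show "\<exists>(A, Bj) \<in> set R'. A \<omega> \<and> conj_val (ext (\<lambda>_. False) \<omega>) (Bj \<inter> lits C') \<and> conj_val c (Bj \<inter> lits ?C)"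
            using cv s1 by blast
        next
          assume "\<exists>(A, Bj) \<in> set R'. A \<omega> \<and> conj_val (ext (\<lambda>_. False) \<omega>) (Bj \<inter> lits C') \<and> conj_val c (Bj \<inter> lits ?C)"
          then obtain A Bj where "(A, Bj) \<in> set R'" "A \<omega>" "conj_val (ext (\<lambda>_. False) \<omega>) (Bj \<inter> lits C') \<and> conj_val c (Bj \<inter> lits ?C)" by blast
          then show "\<exists>(A, Bj) \<in> set R'. A \<omega> \<and> conj_val (ext c \<omega>) Bj"
            using cv s1 by blast
        qed
        also have "\<dots> \<longleftrightarrow> (\<exists>(A, Bj) \<in> set R. A \<omega> \<and> conj_val c Bj)"
          unfolding R_def by (force simp: split_beta)
        finally show ?thesis .
      qed
    qed
    then obtain A Bi where "(A, Bi) \<in> set R" "B \<subseteq> Bi"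
      using assms(10) unfolding irreducible_def by blast
    then show ?thesis unfolding R_def by auto
  qed
  show ?thesis unfolding irreducible_def using Bd main by blast
qed

end
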